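(* Let $\ell\ge1$, let $G$ be an $\ell$-connected chordal graph, and let $T$ be a clique of $G$ with $T\ne V(G)$. If $(G,T)$ can be obtained from $(G-v,T\setminus\{v\})$ using an introduce operation, then $|T|\ge \ell+1$ and $G-v$ is $\ell$-connected. If $(G,T)$ can be obtained from $(G_1,T)$ and $(G_2,T)$ using a join operation, then $|T|\ge\ell$ and both $G_1$ and $G_2$ are $\ell$-connected.
   Context: A chordal graph has no induced cycle of length $>3$. For $\ell\ge1$, a connected graph $G$ is $\ell$-connected if $|V(G)|\ge\ell+1$ and every vertex cut (set whose removal disconnects $G$) has at least $\ell$ vertices. A terminal graph $(G,T)$ is a graph with $T\subseteq V(G)$. $(G,T)$ is obtained from $(G-v,T\setminus\{v\})$ by introducing $v$ if $T\ne V(G)$, $v\in T$ and $N(v)\subseteq T$. $(G,T)$ is the join of $(G_1,T)$ and $(G_2,T)$ if $G_1,G_2$ are induced subgraphs of $G$, $V(G_1)\cap V(G_2)=T$, $V(G_1)\cup V(G_2)=V(G)$, $V(G_1)\ne T\ne V(G_2)$, and every edge of $G$ lies in $G_1$ or in $G_2$. *)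

theory Defs
  imports Main
begin

definition graph :: "'a set \<Rightarrow> ('a \<Rightarrow> 'a \<Rightarrow> bool) \<Rightarrow> bool" where
  "graph V E \<longleftrightarrow> finite V \<and> (\<forall>u v. E u v \<longrightarrow> u \<in> V \<and> v \<in> V \<and> u \<noteq> v \<and> E v u)"

definition induced :: "('a \<Rightarrow> 'a \<Rightarrow> bool) \<Rightarrow> 'a set \<Rightarrow> 'a \<Rightarrow> 'a \<Rightarrow> bool" where
  "induced E S = (\<lambda>u v. E u v \<and> u \<in> S \<and> v \<in> S)"

definition connected_graph :: "'a set \<Rightarrow> ('a \<Rightarrow> 'a \<Rightarrow> bool) \<Rightarrow> bool" where
  "connected_graph V E \<longleftrightarrow> V \<noteq> {} \<and> (\<forall>u\<in>V. \<forall>w\<in>V. (induced E V)\<^sup>*\<^sup>* u w)"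

definition vertex_cut :: "'a set \<Rightarrow> ('a \<Rightarrow> 'a \<Rightarrow> bool) \<Rightarrow> 'a set \<Rightarrow> bool" where
  "vertex_cut V E S \<longleftrightarrow> S \<subseteq> V \<and> \<not> connected_graph (V - S) (induced E (V - S))"

definition l_connected :: "nat \<Rightarrow> 'a set \<Rightarrow> ('a \<Rightarrow> 'a \<Rightarrow> bool) \<Rightarrow> bool" where
  "l_connected l V E \<longleftrightarrow> connected_graph V E \<and> card V \<ge> l + 1 \<and>
     (\<forall>S. vertex_cut V E S \<longrightarrow> card S \<ge> l)"

definition induced_cycle :: "'a set \<Rightarrow> ('a \<Rightarrow> 'a \<Rightarrow> bool) \<Rightarrow> 'a list \<Rightarrow> bool" where
  "induced_cycle V E xs \<longleftrightarrow> length xs \<ge> 3 \<and> distinct xs \<and> set xs \<subseteq> V \<and>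
     (\<forall>i < length xs. \<forall>j < length xs.
        E (xs ! i) (xs ! j) \<longleftrightarrow> (j = Suc i mod length xs \<or> i = Suc j mod length xs))"

definition chordal :: "'a set \<Rightarrow> ('a \<Rightarrow> 'a \<Rightarrow> bool) \<Rightarrow> bool" where
  "chordal V E \<longleftrightarrow> \<not> (\<exists>xs. induced_cycle V E xs \<and> length xs > 3)"

definition clique :: "'a set \<Rightarrow> ('a \<Rightarrow> 'a \<Rightarrow> bool) \<Rightarrow> 'a set \<Rightarrow> bool" where
  "clique V E T \<longleftrightarrow> T \<subseteq> V \<and> (\<forall>u\<in>T. \<forall>w\<in>T. u \<noteq> w \<longrightarrow> E u w)"

text \<open>(G,T) is obtained from (G - v, T - {v}) by introducing v.\<close>
definition introduce :: "'a set \<Rightarrow> ('a \<Rightarrow> 'a \<Rightarrow> bool) \<Rightarrow> 'a set \<Rightarrow> 'a \<Rightarrow> bool" where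
  "introduce V E T v \<longleftrightarrow> T \<noteq> V \<and> v \<in> T \<and> {u. E v u} \<subseteq> T"

text \<open>(G,T) is the join of (G[V1],T) and (G[V2],T).\<close>
definition join :: "'a set \<Rightarrow> ('a \<Rightarrow> 'a \<Rightarrow> bool) \<Rightarrow> 'a set \<Rightarrow> 'a set \<Rightarrow> 'a set \<Rightarrow> bool" where
  "join V E T V1 V2 \<longleftrightarrow> V1 \<subseteq> V \<and> V2 \<subseteq> V \<and> V1 \<inter> V2 = T \<and> V1 \<union> V2 = V \<and>
     V1 \<noteq> T \<and> V2 \<noteq> T \<and>
     (\<forall>u v. E u v \<longrightarrow> (u \<in> V1 \<and> v \<in> V1) \<or> (u \<in> V2 \<and> v \<in> V2))"

end

theory Submission
  imports Defs
begin

lemma induced_sub: "B \<subseteq> A \<Longrightarrow> induced (induced E A) B = induced E B"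
  by (auto simp: induced_def fun_eq_iff)

lemma induced_idem[simp]: "induced (induced E A) A = induced E A"
  by (auto simp: induced_def fun_eq_iff)

lemma sep_disconn:
  assumes "a \<in> A" "b \<in> V'" "b \<notin> A" "A \<subseteq> V'"
    and cl: "\<forall>x\<in>A. \<forall>y\<in>V'. E x y \<longrightarrow> y \<in> A"
  shows "\<not> connected_graph V' (induced E V')"
proof
  assume c: "connected_graph V' (induced E V')"
  have p: "(induced E V')\<^sup>*\<^sup>* a b" using c assms unfolding connected_graph_def induced_idem by blast
  have "\<And>y. (induced E V')\<^sup>*\<^sup>* a y \<Longrightarrow> y \<in> A"
  proof -
    fix y assume "(induced E V')\<^sup>*\<^sup>* a y"
    then show "y \<in> A"
    proof (induction rule: rtranclp_induct)
      case base then show ?case using assms by simp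
    next
      case (step y z) then show ?case using cl by (auto simp: induced_def)
    qed
  qed
  from this[OF p] have "b \<in> A" .
  then show False using assms(3) by simp
qed

lemma disconn_sep:
  assumes "V' \<noteq> {}" "\<not> connected_graph V' (induced E V')"
  obtains A where "A \<subseteq> V'" "A \<noteq> {}" "V' - A \<noteq> {}" "\<forall>x\<in>A. \<forall>y\<in>V'. E x y \<longrightarrow> y \<in> A"
proof -
  obtain u w where uw: "u \<in> V'" "w \<in> V'" "\<not> (induced E V')\<^sup>*\<^sup>* u w"
    using assms unfolding connected_graph_def induced_idem by blast
  define A where "A = {x \<in> V'. (induced E V')\<^sup>*\<^sup>* u x}"
  have "A \<subseteq> V'" "u \<in> A" "w \<in> V' - A" using uw by (auto simp: A_def)
  moreover have "\<forall>x\<in>A. \<forall>y\<in>V'. E x y \<longrightarrow> y \<in> A"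
  proof (intro ballI impI)
    fix x y assume "x \<in> A" "y \<in> V'" "E x y"
    then have "(induced E V')\<^sup>*\<^sup>* u x" "induced E V' x y" by (auto simp: A_def induced_def)
    then have "(induced E V')\<^sup>*\<^sup>* u y" by (rule rtranclp.rtrancl_into_rtrancl)
    then show "y \<in> A" using \<open>y \<in> V'\<close> by (simp add: A_def)
  qed
  ultimately show ?thesis using that by blast
qed

lemma intro_part:
  assumes g: "graph V E" and l1: "l \<ge> 1" and lc: "l_connected l V E"
    and cl: "clique V E T" and TV: "T \<noteq> V" and iv: "introduce V E T v"
  shows "card T \<ge> l + 1 \<and> l_connected l (V - {v}) (induced E (V - {v}))"
proof -
  have fin: "finite V" using g unfolding graph_def by auto
  have sym: "\<And>x y. E x y \<Longrightarrow> E y x" and inV: "\<And>x y. E x y \<Longrightarrow> x \<in> V \<and> y \<in> V \<and> x \<noteq> y"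
    using g unfolding graph_def by auto
  have TsV: "T \<subseteq> V" using cl unfolding clique_def by auto
  have clq: "\<And>x y. x \<in> T \<Longrightarrow> y \<in> T \<Longrightarrow> x \<noteq> y \<Longrightarrow> E x y" using cl unfolding clique_def by auto
  obtain w where w: "w \<in> V" "w \<notin> T" using TsV TV by blast
  have vT: "v \<in> T" and NT: "{u. E v u} \<subseteq> T" using iv unfolding introduce_def by auto
  define N where "N = {u. E v u}"
  have cut: "\<And>S. vertex_cut V E S \<Longrightarrow> card S \<ge> l" using lc unfolding l_connected_def by auto
  have vN: "v \<notin> N" using inV N_def by auto
  have "vertex_cut V E N"
    unfolding vertex_cut_def
  proof
    show "N \<subseteq> V" using inV N_def by auto
    show "\<not> connected_graph (V - N) (induced E (V - N))"
      apply (rule sep_disconn[where a=v and A="{v}" and b=w])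
      using w vT TsV vN NT N_def by auto
  qed
  then have cN: "card N \<ge> l" by (rule cut)
  have finT: "finite T" using fin TsV finite_subset by auto
  have "insert v N \<subseteq> T" using vT NT N_def by auto
  then have "card (insert v N) \<le> card T" using finT card_mono by blast
  moreover have "card (insert v N) = card N + 1" using vN finT \<open>insert v N \<subseteq> T\<close>
    by (metis Suc_eq_plus1 card_insert_disjoint finite_insert finite_subset)
  ultimately have cT: "card T \<ge> l + 1" using cN by simp
  have "card T < card V" using TsV TV fin psubset_card_mono by blast
  then have cV: "card (V - {v}) \<ge> l + 1" using cT vT TsV fin by auto
  have cut': "\<And>S. vertex_cut (V-{v}) (induced E (V-{v})) S \<Longrightarrow> card S \<ge> l"
  proof -
    fix S assume vc: "vertex_cut (V-{v}) (induced E (V-{v})) S"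
    have S: "S \<subseteq> V - {v}" using vc unfolding vertex_cut_def by blast
    have ii: "induced (induced E (V-{v})) (V-{v}-S) = induced E (V-{v}-S)"
      by (rule induced_sub) auto
    have nc: "\<not> connected_graph (V-{v}-S) (induced E (V-{v}-S))"
      using vc ii unfolding vertex_cut_def by metis
    show "card S \<ge> l"
    proof (cases "V-{v}-S = {}")
      case True
      then have "S = V - {v}" using S by auto
      then show ?thesis using cV by simp
    next
      case False
      obtain A where A: "A \<subseteq> V-{v}-S" "A \<noteq> {}" "V-{v}-S - A \<noteq> {}"
        "\<forall>x\<in>A. \<forall>y\<in>V-{v}-S. E x y \<longrightarrow> y \<in> A"
        using disconn_sep[OF False nc] by blast
      obtain b where b: "b \<in> V-{v}-S" "b \<notin> A" using A(3) by blast
      have "\<not> connected_graph (V-S) (induced E (V-S))"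
      proof (cases "\<exists>x\<in>A. E v x")
        case True
        then obtain a where a: "a \<in> A" "E v a" by blast
        show ?thesis
        proof (rule sep_disconn[where a=v and A="insert v A" and b=b])
          show "\<forall>x\<in>insert v A. \<forall>y\<in>V - S. E x y \<longrightarrow> y \<in> insert v A"
          proof (intro ballI impI)
            fix x y assume x: "x \<in> insert v A" and y: "y \<in> V - S" and e: "E x y"
            show "y \<in> insert v A"
            proof (cases "x = v")
              case True
              show ?thesis
              proof (rule ccontr)
                assume ny: "y \<notin> insert v A"
                have "y \<in> T" using NT e True by auto
                moreover have "a \<in> T" using NT a by auto
                moreover have "a \<noteq> y" using ny a by auto
                ultimately have "E a y" using clq by blast
                then have "y \<in> A" using A(4) a y ny by auto
                then show False using ny by auto
              qed
            next
              case False
              then show ?thesis using A(4) x y e by auto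
            qed
          qed
        qed (use b A vT TsV S in auto)
      next
        case False
        obtain a where a: "a \<in> A" using A(2) by blast
        show ?thesis
        proof (rule sep_disconn[where a=a and A="A" and b=b])
          show "\<forall>x\<in>A. \<forall>y\<in>V - S. E x y \<longrightarrow> y \<in> A"
            using A(4) False sym by blast
        qed (use b A a in auto)
      qed
      then have "vertex_cut V E S" using S unfolding vertex_cut_def by blast
      then show ?thesis by (rule cut)
    qed
  qed
  have "connected_graph (V-{v}) (induced E (V-{v}))"
  proof (rule ccontr)
    assume "\<not> ?thesis"
    moreover have "induced (induced E (V-{v})) (V-{v}-{}) = induced E (V-{v})"
      by (simp add: induced_sub)
    ultimately have "vertex_cut (V-{v}) (induced E (V-{v})) {}" by (simp add: vertex_cut_def)
    then have "card ({}::'a set) \<ge> l" by (rule cut')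
    then show False using l1 by simp
  qed
  then show ?thesis using cT cV cut' by (auto simp: l_connected_def)
qed

lemma join_sym: "join V E T V1 V2 \<Longrightarrow> join V E T V2 V1"
  unfolding join_def by blast

lemma join_card:
  assumes g: "graph V E" and lc: "l_connected l V E" and j: "join V E T V1 V2"
  shows "card T \<ge> l"
proof -
  have cut: "\<And>S. vertex_cut V E S \<Longrightarrow> card S \<ge> l" using lc unfolding l_connected_def by auto
  have J: "V1 \<subseteq> V" "V2 \<subseteq> V" "V1 \<inter> V2 = T" "V1 \<union> V2 = V" "V1 \<noteq> T" "V2 \<noteq> T"
     "\<And>u v. E u v \<Longrightarrow> (u \<in> V1 \<and> v \<in> V1) \<or> (u \<in> V2 \<and> v \<in> V2)"
    using j unfolding join_def by blast+
  obtain a where a: "a \<in> V1" "a \<notin> T" using J by blast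
  obtain b where b: "b \<in> V2" "b \<notin> T" using J by blast
  have "\<not> connected_graph (V - T) (induced E (V - T))"
  proof (rule sep_disconn[where a=a and A="V1 - T" and b=b])
    show "\<forall>x\<in>V1 - T. \<forall>y\<in>V - T. E x y \<longrightarrow> y \<in> V1 - T"
      using J by blast
  qed (use a b J in auto)
  then have "vertex_cut V E T" using J unfolding vertex_cut_def by blast
  then show ?thesis by (rule cut)
qed

lemma join_part:
  assumes g: "graph V E" and l1: "l \<ge> 1" and lc: "l_connected l V E"
    and cl: "clique V E T" and j: "join V E T V1 V2" and cT: "card T \<ge> l"
  shows "l_connected l V1 (induced E V1)"
proof -
  have fin: "finite V" using g unfolding graph_def by auto
  have sym: "\<And>x y. E x y \<Longrightarrow> E y x"
    using g unfolding graph_def by auto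
  have clq: "\<And>x y. x \<in> T \<Longrightarrow> y \<in> T \<Longrightarrow> x \<noteq> y \<Longrightarrow> E x y" using cl unfolding clique_def by auto
  have cut: "\<And>S. vertex_cut V E S \<Longrightarrow> card S \<ge> l" using lc unfolding l_connected_def by auto
  have J: "V1 \<subseteq> V" "V2 \<subseteq> V" "V1 \<inter> V2 = T" "V1 \<union> V2 = V" "V1 \<noteq> T" "V2 \<noteq> T"
     "\<And>u v. E u v \<Longrightarrow> (u \<in> V1 \<and> v \<in> V1) \<or> (u \<in> V2 \<and> v \<in> V2)"
    using j unfolding join_def by blast+
  have fin1: "finite V1" using fin J finite_subset by auto
  have "T \<subset> V1" using J by blast
  then have "card T < card V1" using fin1 psubset_card_mono by blast
  then have cV: "card V1 \<ge> l + 1" using cT by simp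
  have cut': "\<And>S. vertex_cut V1 (induced E V1) S \<Longrightarrow> card S \<ge> l"
  proof -
    fix S assume vc: "vertex_cut V1 (induced E V1) S"
    have S: "S \<subseteq> V1" using vc unfolding vertex_cut_def by blast
    have ii: "induced (induced E V1) (V1-S) = induced E (V1-S)"
      by (rule induced_sub) auto
    have nc: "\<not> connected_graph (V1-S) (induced E (V1-S))"
      using vc ii unfolding vertex_cut_def by metis
    show "card S \<ge> l"
    proof (cases "V1-S = {}")
      case True
      then have "S = V1" using S by auto
      then show ?thesis using cV by simp
    next
      case ne: False
      show ?thesis
      proof (cases "T \<subseteq> S")
        case True
        then have "card T \<le> card S" using fin1 S finite_subset card_mono by metis
        then show ?thesis using cT by simp
      next
        case False
        then obtain t where t: "t \<in> T" "t \<notin> S" by blast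
        obtain A where A: "A \<subseteq> V1-S" "A \<noteq> {}" "V1-S - A \<noteq> {}"
          "\<forall>x\<in>A. \<forall>y\<in>V1-S. E x y \<longrightarrow> y \<in> A"
          using disconn_sep[OF ne nc] by blast
        have tV1: "t \<in> V1" using t J by blast
        have "\<exists>D. D \<subseteq> V1 - S \<and> D \<noteq> {} \<and> D \<inter> T = {} \<and> (\<forall>x\<in>D. \<forall>y\<in>V1-S. E x y \<longrightarrow> y \<in> D)"
        proof (cases "t \<in> A")
          case True
          show ?thesis
          proof (intro exI[where x="V1-S-A"] conjI)
            show "(V1 - S - A) \<inter> T = {}"
            proof (rule ccontr)
              assume "\<not> ?thesis"
              then obtain z where z: "z \<in> V1-S-A" "z \<in> T" by blast
              then have "z \<noteq> t" using True by auto
              then have "E t z" using clq z t by blast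
              then show False using A(4) True z by auto
            qed
            show "\<forall>x\<in>V1 - S - A. \<forall>y\<in>V1 - S. E x y \<longrightarrow> y \<in> V1 - S - A"
              using A(4) sym by blast
          qed (use A in auto)
        next
          case False
          show ?thesis
          proof (intro exI[where x="A"] conjI)
            show "A \<inter> T = {}"
            proof (rule ccontr)
              assume "\<not> ?thesis"
              then obtain z where z: "z \<in> A" "z \<in> T" by blast
              then have "z \<noteq> t" using False by auto
              then have "E z t" using clq z t by blast
              then show False using A(4) False z t tV1 by auto
            qed
          qed (use A in auto)
        qed
        then obtain D where D: "D \<subseteq> V1 - S" "D \<noteq> {}" "D \<inter> T = {}"
          "\<forall>x\<in>D. \<forall>y\<in>V1-S. E x y \<longrightarrow> y \<in> D" by blast
        obtain a where a: "a \<in> D" using D by blast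
        have "\<not> connected_graph (V-S) (induced E (V-S))"
        proof (rule sep_disconn[where a=a and A=D and b=t])
          show "\<forall>x\<in>D. \<forall>y\<in>V - S. E x y \<longrightarrow> y \<in> D"
          proof (intro ballI impI)
            fix x y assume x: "x \<in> D" and y: "y \<in> V - S" and e: "E x y"
            have "x \<notin> V2" using x D J by blast
            then have "y \<in> V1" using J(7)[OF e] by blast
            then show "y \<in> D" using D(4) x y e by blast
          qed
        qed (use a D t J tV1 in auto)
        then have "vertex_cut V E S" using S J unfolding vertex_cut_def by blast
        then show ?thesis by (rule cut)
      qed
    qed
  qed
  have "connected_graph V1 (induced E V1)"
  proof (rule ccontr)
    assume "\<not> ?thesis"
    moreover have "induced (induced E V1) (V1-{}) = induced E V1"
      by (simp add: induced_sub)
    ultimately have "vertex_cut V1 (induced E V1) {}" by (simp add: vertex_cut_def)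
    then have "card ({}::'a set) \<ge> l" by (rule cut')
    then show False using l1 by simp
  qed
  then show ?thesis using cV cut' by (auto simp: l_connected_def)
qed

theorem proposition6:
  fixes V :: "'a set" and E :: "'a \<Rightarrow> 'a \<Rightarrow> bool" and T :: "'a set" and l :: nat
  assumes "graph V E"
    and "l \<ge> 1"
    and "l_connected l V E"
    and "chordal V E"
    and "clique V E T"
    and "T \<noteq> V"
  shows "(\<forall>v. introduce V E T v \<longrightarrow>
            card T \<ge> l + 1 \<and> l_connected l (V - {v}) (induced E (V - {v})))
       \<and> (\<forall>V1 V2. join V E T V1 V2 \<longrightarrow>
            card T \<ge> l \<and> l_connected l V1 (induced E V1) \<and> l_connected l V2 (induced E V2))"
proof (rule conjI; intro allI impI)
  fix v assume "introduce V E T v"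
  then show "card T \<ge> l + 1 \<and> l_connected l (V - {v}) (induced E (V - {v}))"
    by (rule intro_part[OF assms(1,2,3,5,6)])
next
  fix V1 V2 assume j: "join V E T V1 V2"
  have c: "card T \<ge> l" by (rule join_card[OF assms(1,3) j])
  show "card T \<ge> l \<and> l_connected l V1 (induced E V1) \<and> l_connected l V2 (induced E V2)"
    using c join_part[OF assms(1,2,3,5) j c] join_part[OF assms(1,2,3,5) join_sym[OF j] c] by simp
qed

end
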